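(* Let $k\ge2$ and let $B$ be a $k\times k$ symmetric matrix over $\mathbb F_2$ of rank $k-2$ with every row sum $0$. Let $\Sigma_B$ be the set of $\alpha=(\alpha_1,\dots,\alpha_k)$ with $\alpha_j\in\{1,5,9,13\}$ and $\prod_j\alpha_j\equiv1\pmod8$ such that the $k\times(k+1)$ matrix $(B\mid\mathfrak b_\alpha)$ has rank $k-1$ over $\mathbb F_2$, where $\mathfrak b_\alpha=([2/\alpha_1],\dots,[2/\alpha_k])^T$. Then $\#\Sigma_B=2^{2k-2}$.
   Context: For an odd integer $a$, $[2/a]=1$ if $a\equiv\pm5\pmod8$ and $[2/a]=0$ otherwise. *)

theory Defs
  imports "HOL-Analysis.Analysis" "HOL-Library.Z2"
begin

text \<open>The symbol [2/a]: for an odd integer a, it is 1 if a is congruent to 5 or -5 mod 8, else 0.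
  Values are taken in the field F_2, modelled by the type bit.\<close>
definition two_sym :: "int \<Rightarrow> bit" where
  "two_sym a = (if a mod 8 = 3 \<or> a mod 8 = 5 then 1 else 0)"

definition bvec :: "('n::finite \<Rightarrow> int) \<Rightarrow> bit ^ 'n" where
  "bvec \<alpha> = (\<chi> j. two_sym (\<alpha> j))"

definition augment :: "bit ^ 'n ^ 'n \<Rightarrow> bit ^ 'n \<Rightarrow> bit ^ ('n + unit) ^ 'n" where
  "augment B b = (\<chi> i. \<chi> c. (case c of Inl j \<Rightarrow> B $ i $ j | Inr _ \<Rightarrow> b $ i))"

definition SigmaB :: "bit ^ 'n::finite ^ 'n \<Rightarrow> ('n \<Rightarrow> int) set" where
  "SigmaB B = {\<alpha>. (\<forall>j. \<alpha> j \<in> {1, 5, 9, 13}) \<and> (\<Prod>j\<in>UNIV. \<alpha> j) mod 8 = 1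
                 \<and> rank (augment B (bvec \<alpha>)) = CARD('n) - 1}"

end

theory Submission
  imports Defs
begin


lemma bit_cases: "(x::bit) = 0 \<or> x = 1" by (cases "x = 0") auto

lemma UNIV_bit: "(UNIV::bit set) = {0,1}" using bit_cases by auto

instance bit :: finite
  by standard (simp add: UNIV_bit)

lemma card_bit: "CARD(bit) = 2" by (simp add: UNIV_bit)

lemma bit_add_self [simp]: "(x::bit) + x = 0"
  using bit_cases[of x] by auto

lemma vec_add_self [simp]: "(x::bit^'n) + x = 0"
  by (simp add: vec_eq_iff)

lemma bit_minus [simp]: "- (x::bit) = x"
  using bit_cases[of x] by auto

lemma vec_minus_eq_add: "(x::bit^'n) - y = x + y"
  by (simp add: vec_eq_iff)

lemma card_vec_bit: "CARD(bit^'n) = 2 ^ CARD('n)"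
  by (simp add: card_bit)

lemma card_span_insert:
  fixes x :: "bit ^ 'n"
  assumes "x \<notin> vec.span S"
  shows "card (vec.span (insert x S)) = 2 * card (vec.span S)"
proof -
  have eq: "vec.span (insert x S) = vec.span S \<union> (\<lambda>v. x + v) ` vec.span S"
  proof
    show "vec.span (insert x S) \<subseteq> vec.span S \<union> (\<lambda>v. x + v) ` vec.span S"
    proof
      fix y assume "y \<in> vec.span (insert x S)"
      then obtain k where k: "y - k *s x \<in> vec.span S" by (auto simp: vec.span_insert)
      show "y \<in> vec.span S \<union> (\<lambda>v. x + v) ` vec.span S"
      proof (cases "k = 0")
        case True then show ?thesis using k by simp
      next
        case False then have "k = 1" by simp
        then have "y + x \<in> vec.span S" using k by (simp add: vec_minus_eq_add)
        moreover have "y = x + (y + x)" by (metis add.assoc add.commute vec_add_self add.right_neutral)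
        ultimately show ?thesis by blast
      qed
    qed
    show "vec.span S \<union> (\<lambda>v. x + v) ` vec.span S \<subseteq> vec.span (insert x S)"
    proof (intro subsetI)
      fix y assume "y \<in> vec.span S \<union> (\<lambda>v. x + v) ` vec.span S"
      moreover have "vec.span S \<subseteq> vec.span (insert x S)" by (rule vec.span_mono) auto
      moreover have "x \<in> vec.span (insert x S)" by (rule vec.span_base) simp
      ultimately show "y \<in> vec.span (insert x S)" by (auto intro: vec.span_add)
    qed
  qed
  have disj: "vec.span S \<inter> (\<lambda>v. x + v) ` vec.span S = {}"
  proof (rule ccontr)
    assume "vec.span S \<inter> (\<lambda>v. x + v) ` vec.span S \<noteq> {}"
    then obtain v where v: "v \<in> vec.span S" "x + v \<in> vec.span S" by auto
    have "(x + v) + v \<in> vec.span S" using v(2) v(1) by (rule vec.span_add)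
    then show False using assms by (simp add: add.assoc)
  qed
  have inj: "inj ((+) x)" by (simp add: inj_def)
  show ?thesis
    unfolding eq
    by (subst card_Un_disjoint) (use disj in \<open>auto simp: card_image[OF inj_on_subset[OF inj]]\<close>)
qed

lemma card_span_indep:
  fixes B :: "(bit^'n) set"
  assumes "vec.independent B"
  shows "card (vec.span B) = 2 ^ card B"
proof -
  have "finite B" by simp
  then show ?thesis using assms
  proof (induction B rule: finite_induct)
    case empty then show ?case by simp
  next
    case (insert x F)
    then have "vec.independent F" "x \<notin> vec.span F"
      by (auto simp: vec.independent_insert)
    then show ?case using insert by (simp add: card_span_insert)
  qed
qed

lemma card_span:
  fixes S :: "(bit^'n) set"
  shows "card (vec.span S) = 2 ^ vec.dim S"
proof -
  obtain B where B: "B \<subseteq> S" "vec.independent B" "S \<subseteq> vec.span B" "card B = vec.dim S"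
    using vec.basis_exists[of S] by blast
  have "vec.span B = vec.span S"
    using B by (metis vec.span_mono vec.span_span subset_antisym)
  then show ?thesis using card_span_indep[OF B(2)] B(4) by simp
qed

lemma card_range_ker:
  fixes f :: "bit^'n \<Rightarrow> bit^'m"
  assumes add: "\<And>x y. f (x + y) = f x + f y"
  shows "card (range f) * card {x. f x = 0} = 2 ^ CARD('n)"
proof -
  have fib: "card (f -` {y}) = card {x. f x = 0}" if "y \<in> range f" for y
  proof -
    from that obtain x0 where y: "y = f x0" by auto
    have "f -` {y} = (\<lambda>z. x0 + z) ` {x. f x = 0}"
    proof (intro equalityI subsetI)
      fix z assume "z \<in> f -` {y}"
      then have "f (x0 + z) = 0" using y by (simp add: add)
      moreover have "z = x0 + (x0 + z)" by (simp flip: add.assoc)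
      ultimately show "z \<in> (\<lambda>z. x0 + z) ` {x. f x = 0}" by blast
    qed (auto simp: add y)
    moreover have "inj ((+) x0)" by (simp add: inj_def)
    ultimately show ?thesis by (simp add: card_image inj_on_subset)
  qed
  have "UNIV = (\<Union>y\<in>range f. f -` {y})" by auto
  then have "card (UNIV :: (bit^'n) set) = card (\<Union>y\<in>range f. f -` {y})" by simp
  also have "\<dots> = (\<Sum>y\<in>range f. card (f -` {y}))"
    by (rule card_UN_disjoint) auto
  also have "\<dots> = (\<Sum>y\<in>range f. card {x. f x = 0})" using fib by simp
  finally show ?thesis using card_bit by (simp add: mult.commute)
qed



lemma if01_mult: "(if P then 1 else 0) * (x::'a::semiring_1) = (if P then x else 0)" by simp
lemma if01_mult_right: "x * (if P then 1 else 0) = (if P then (x::'a::semiring_1) else 0)" by simp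

lemma vm_sum: "c v* (A::'a::field^'n^'m) = (\<Sum>i\<in>UNIV. c$i *s A$i)"
  by (simp add: vec_eq_iff vector_matrix_mult_def sum_component mult.commute)

lemma span_rows_range: "vec.span (rows (A::'a::field^'n^'m)) = range (\<lambda>c. c v* A)"
proof
  show "vec.span (rows A) \<subseteq> range (\<lambda>c. c v* A)"
  proof (rule vec.span_minimal)
    show "rows A \<subseteq> range (\<lambda>c. c v* A)"
    proof
      fix r assume "r \<in> rows A"
      then obtain i where r: "r = row i A" by (auto simp: rows_def)
      have "axis i 1 v* A = r" unfolding r
        by (simp add: vec_eq_iff vector_matrix_mult_def axis_def row_def if01_mult)
      then show "r \<in> range (\<lambda>c. c v* A)" by blast
    qed
    show "vec.subspace (range (\<lambda>c. c v* A))"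
      unfolding vec.subspace_def
    proof (intro conjI ballI allI)
      show "0 \<in> range (\<lambda>c. c v* A)" by (metis rangeI vector_matrix_mult_0)
    next
      fix x y assume "x \<in> range (\<lambda>c. c v* A)" "y \<in> range (\<lambda>c. c v* A)"
      then show "x + y \<in> range (\<lambda>c. c v* A)"
        by (auto simp flip: vector_matrix_left_distrib)
    next
      fix c x assume "x \<in> range (\<lambda>c. c v* A)"
      then show "c *s x \<in> range (\<lambda>c. c v* A)"
        by (auto simp flip: scalar_vector_matrix_assoc)
    qed
  qed
  show "range (\<lambda>c. c v* A) \<subseteq> vec.span (rows A)"
  proof
    fix y assume "y \<in> range (\<lambda>c. c v* A)"
    then obtain c where y: "y = (\<Sum>i\<in>UNIV. c$i *s A$i)" by (auto simp: vm_sum)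
    have "A$i \<in> rows A" for i
      by (auto simp: rows_def row_def)
    then show "y \<in> vec.span (rows A)" unfolding y
      by (intro vec.span_sum vec.span_scale vec.span_base)
  qed
qed

lemma rank_kernel:
  fixes A :: "bit^'n^'m"
  shows "2 ^ rank A * card {c. c v* A = 0} = 2 ^ CARD('m)"
proof -
  have "card (range (\<lambda>c. c v* A)) = 2 ^ rank A"
    by (simp add: row_rank_def_gen card_span flip: span_rows_range)
  then show ?thesis
    using card_range_ker[of "\<lambda>c. c v* A"] by (simp add: vector_matrix_left_distrib)
qed

definition dotb :: "bit^'n \<Rightarrow> bit^'n \<Rightarrow> bit" where
  "dotb c b = (\<Sum>i\<in>UNIV. c$i * b$i)"

lemma dotb_add_left: "dotb (x + y) b = dotb x b + dotb y b"
  by (simp only: dotb_def vector_add_component distrib_right sum.distrib)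

lemma dotb_add_right: "dotb c (x + y) = dotb c x + dotb c y"
  by (simp only: dotb_def vector_add_component distrib_left sum.distrib)

lemma dotb_zero [simp]: "dotb 0 b = 0"
  by (simp add: dotb_def)

lemma dotb_axis: "dotb c (axis i 1) = c $ i"
  unfolding dotb_def axis_def
  by (simp only: vec_lambda_beta if01_mult_right sum.delta finite UNIV_I if_True)

lemma sum_UNIV_split: "(\<forall>x::'a+unit. P x) \<longleftrightarrow> (\<forall>j. P (Inl j)) \<and> P (Inr ())"
  by (metis (full_types) old.unit.exhaust sum.exhaust)

lemma aug_kernel:
  fixes B :: "bit^'n^'n"
  shows "c v* augment B b = 0 \<longleftrightarrow> c v* B = 0 \<and> dotb c b = 0"
  by (simp add: vec_eq_iff sum_UNIV_split vector_matrix_mult_def augment_def dotb_def mult.commute)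

lemma card_split_bit:
  fixes f :: "'a::finite \<Rightarrow> bit"
  shows "card {x. P x} = card {x. P x \<and> f x = 0} + card {x. P x \<and> f x = 1}"
proof -
  have "{x. P x} = {x. P x \<and> f x = 0} \<union> {x. P x \<and> f x = 1}" using bit_cases by auto
  then show ?thesis by (simp add: card_Un_disjoint[symmetric] disjoint_iff)
qed

lemma card_transl:
  fixes v :: "bit^'n"
  shows "card {b. P (b + v)} = card {b. P b}"
proof -
  have "{b. P b} = (\<lambda>b. b + v) ` {b. P (b + v)}"
  proof (intro equalityI subsetI)
    fix b assume "b \<in> {b. P b}"
    then have "b + v \<in> {b. P (b + v)}" "b = (b + v) + v" by (simp_all add: add.assoc)
    then show "b \<in> (\<lambda>b. b + v) ` {b. P (b + v)}" by blast
  qed auto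
  moreover have "inj (\<lambda>b::bit^'n. b + v)" by (simp add: inj_def)
  ultimately show ?thesis by (simp add: card_image inj_on_subset)
qed

lemma prod_mod8:
  assumes "\<forall>j. \<alpha> j \<in> {1,5,9,13::int}" "finite A"
  shows "(\<Prod>j\<in>A. \<alpha> j) mod 8 = (if (\<Sum>j\<in>A. two_sym (\<alpha> j)) = 1 then 5 else 1)"
  using assms(2)
proof induction
  case empty then show ?case by simp
next
  case (insert x F)
  let ?s = "\<Sum>j\<in>F. two_sym (\<alpha> j)"
  have m: "(\<Prod>j\<in>insert x F. \<alpha> j) mod 8 = ((\<alpha> x mod 8) * ((\<Prod>j\<in>F. \<alpha> j) mod 8)) mod 8"
  proof -
    have "(\<Prod>j\<in>insert x F. \<alpha> j) = \<alpha> x * (\<Prod>j\<in>F. \<alpha> j)" using insert(1,2) by simp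
    then show ?thesis by (simp only: mod_mult_eq)
  qed
  have s: "(\<Sum>j\<in>insert x F. two_sym (\<alpha> j)) = two_sym (\<alpha> x) + ?s" using insert by simp
  from assms(1) have "\<alpha> x \<in> {1,5,9,13}" by blast
  then have ax: "\<alpha> x mod 8 = (if two_sym (\<alpha> x) = 1 then 5 else 1)"
    by (auto simp: two_sym_def)
  show ?case
    unfolding m s insert.IH ax using bit_cases[of ?s] bit_cases[of "two_sym (\<alpha> x)"]
    by auto
qed



theorem mainTheorem9:
  fixes B :: "bit ^ 'n::finite ^ 'n"
  assumes "CARD('n) \<ge> 2"
    and "transpose B = B"
    and "rank B = CARD('n) - 2"
    and "\<forall>i. (\<Sum>j\<in>UNIV. B $ i $ j) = 0"
  shows "card (SigmaB B) = 2 ^ (2 * CARD('n) - 2)"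
proof -
  let ?k = "CARD('n)"
  have k2: "?k = (?k - 2) + 2" using assms(1) by simp
  define one :: "bit^'n" where "one = (\<chi> i. 1)"
  define N where "N = {c::bit^'n. c v* B = 0}"
  have finN: "finite N" by simp
  have "2 ^ (?k - 2) * card N = (2::nat) ^ ?k"
    using rank_kernel[of B] assms(3) by (simp add: N_def)
  also have "(2::nat) ^ ?k = 2 ^ (?k - 2) * 4"
    by (subst k2) (simp add: power_add)
  finally have cardN: "card N = 4" by simp
  have symm: "B $ i $ j = B $ j $ i" for i j
    using arg_cong[OF assms(2), of "\<lambda>M. M $ i $ j"] by (simp add: transpose_def)
  have one_N: "one \<in> N"
  proof -
    have "(one v* B) $ j = (\<Sum>i\<in>UNIV. B $ j $ i)" for j
      unfolding vector_matrix_mult_def one_def vec_lambda_beta mult_1_left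
      by (intro sum.cong refl) (rule symm)
    then have "(one v* B) $ j = 0" for j using assms(4) by simp
    then show ?thesis by (simp add: N_def vec_eq_iff)
  qed
  have zero_N: "0 \<in> N" by (simp add: N_def)
  have one_ne: "one \<noteq> 0" by (simp add: one_def vec_eq_iff)
  have N_add: "x + y \<in> N" if "x \<in> N" "y \<in> N" for x y
    using that by (simp add: N_def vector_matrix_left_distrib)
  have "\<not> N \<subseteq> {0, one}"
  proof
    assume "N \<subseteq> {0, one}"
    then have "card N \<le> card {0, one}" by (intro card_mono) auto
    also have "\<dots> \<le> 2" by (simp add: card_insert_if)
    finally show False using cardN by simp
  qed
  then obtain u where u: "u \<in> N" "u \<noteq> 0" "u \<noteq> one" by blast
  have uo: "u + one + one = u" by (simp add: add.assoc)
  have Neq: "N = {0, one, u, u + one}"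
  proof (rule card_subset_eq[symmetric, OF finN])
    show "{0, one, u, u + one} \<subseteq> N" using zero_N one_N u(1) N_add by auto
    have "u + one \<noteq> 0" using uo u(3) by (metis add_0)
    moreover have "u + one \<noteq> one" using u(2) by simp
    moreover have "u + one \<noteq> u" using one_ne by simp
    ultimately show "card {0, one, u, u + one} = card N"
      using u(2,3) one_ne cardN by (simp add: card_insert_if)
  qed
  have key: "rank (augment B b) = ?k - 1 \<longleftrightarrow> dotb u b = 1" if b1: "dotb one b = 0" for b
  proof -
    define K where "K = {c. c v* augment B b = 0}"
    have K: "K = {c \<in> N. dotb c b = 0}" by (auto simp: K_def N_def aug_kernel)
    have rk: "2 ^ rank (augment B b) * card K = 2 ^ ?k"
      using rank_kernel[of "augment B b"] by (simp add: K_def)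
    have d: "dotb (u + one) b = dotb u b" using b1 by (simp add: dotb_add_left)
    show ?thesis
    proof (cases "dotb u b = 1")
      case True
      have "K = {0, one}" unfolding K Neq using True b1 d by auto
      then have "card K = 2" using one_ne by simp
      with rk have "2 ^ (rank (augment B b) + 1) = (2::nat) ^ ?k" by simp
      then have "rank (augment B b) + 1 = ?k" by (simp only: power_inject_exp one_less_numeral_iff semiring_norm)
      then show ?thesis using True by simp
    next
      case False
      then have u0: "dotb u b = 0" using bit_cases by blast
      have "K = N" unfolding K Neq using u0 b1 d by auto
      with rk cardN have "2 ^ (rank (augment B b) + 2) = (2::nat) ^ ?k" by (simp add: power_add)
      then have "rank (augment B b) + 2 = ?k" by (simp only: power_inject_exp one_less_numeral_iff semiring_norm)
      then show ?thesis using False by simp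
    qed
  qed
  obtain i where ui: "u $ i = 1" using u(2) bit_cases by (metis vec_eq_iff zero_index)
  obtain j where uj: "u $ j = 0" using u(3) bit_cases by (metis vec_eq_iff one_def vec_lambda_beta)
  define F where "F s t = card {b. dotb one b = s \<and> dotb u b = t}" for s t
  have tr: "F s t = F (s + dotb one v) (t + dotb u v)" for s t v
  proof -
    have "F (s + dotb one v) (t + dotb u v) = card {b. dotb one (b + v) = s + dotb one v \<and> dotb u (b + v) = t + dotb u v}"
      unfolding F_def
      using card_transl[of "\<lambda>b. dotb one b = s + dotb one v \<and> dotb u b = t + dotb u v" v] by simp
    also have "\<dots> = F s t" by (simp only: F_def dotb_add_right add_right_cancel)
    finally show ?thesis ..
  qed
  have ai: "dotb one (axis i 1) = 1" "dotb u (axis i 1) = 1" using ui by (simp_all add: dotb_axis one_def)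
  have aj: "dotb one (axis j 1) = 1" "dotb u (axis j 1) = 0" using uj by (simp_all add: dotb_axis one_def)
  have f1: "F 0 1 = F 1 0" using tr[of 0 1 "axis i 1"] ai by simp
  have f2: "F 0 1 = F 1 1" using tr[of 0 1 "axis j 1"] aj by simp
  have f3: "F 1 1 = F 0 0" using tr[of 1 1 "axis i 1"] ai by simp
  have "card (UNIV::(bit^'n) set) = F 0 0 + F 0 1 + F 1 0 + F 1 1"
    using card_split_bit[of "\<lambda>b. True" "dotb one"] card_split_bit[of "\<lambda>b. dotb one b = 0" "dotb u"]
      card_split_bit[of "\<lambda>b. dotb one b = 1" "dotb u"]
    unfolding F_def by simp
  then have "2 ^ ?k = 4 * F 0 1" using f1 f2 f3 card_bit by simp
  also have "(2::nat) ^ ?k = 4 * 2 ^ (?k - 2)" by (subst k2) (simp add: power_add)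
  finally have FG: "F 0 1 = 2 ^ (?k - 2)" by simp
  define G where "G = {b. dotb one b = 0 \<and> dotb u b = 1}"
  have cardG: "card G = 2 ^ (?k - 2)" using FG by (simp add: G_def F_def)
  define T :: "bit \<Rightarrow> int set" where "T x = (if x = 1 then {5,13} else {1,9})" for x
  define Fib where "Fib b = {\<alpha>::'n\<Rightarrow>int. \<forall>j. \<alpha> j \<in> T (b $ j)}" for b
  have Tmem: "a \<in> T x \<longleftrightarrow> a \<in> {1,5,9,13} \<and> two_sym a = x" for a x
    using bit_cases[of x] by (auto simp: T_def two_sym_def)
  have Fib_mem: "\<alpha> \<in> Fib b \<longleftrightarrow> (\<forall>j. \<alpha> j \<in> {1,5,9,13}) \<and> bvec \<alpha> = b" for \<alpha> b
    unfolding Fib_def Tmem bvec_def vec_eq_iff by auto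
  have cardFib: "card (Fib b) = 2 ^ ?k" for b
  proof -
    have "Fib b = PiE UNIV (\<lambda>j. T (b $ j))" by (simp add: Fib_def PiE_UNIV_domain Pi_def)
    moreover have "card (T x) = 2" for x by (simp add: T_def)
    ultimately show ?thesis by (simp add: card_PiE)
  qed
  have finFib: "finite (Fib b)" for b
    using cardFib[of b] by (intro card_ge_0_finite) simp
  have dot_bvec: "dotb one (bvec \<alpha>) = (\<Sum>j\<in>UNIV. two_sym (\<alpha> j))" for \<alpha>
    by (simp only: dotb_def one_def bvec_def vec_lambda_beta mult_1_left)
  have Sig: "SigmaB B = (\<Union>b\<in>G. Fib b)"
  proof (intro equalityI subsetI)
    fix \<alpha> assume "\<alpha> \<in> SigmaB B"
    then have a: "\<forall>j. \<alpha> j \<in> {1,5,9,13}" "(\<Prod>j\<in>UNIV. \<alpha> j) mod 8 = 1"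
      "rank (augment B (bvec \<alpha>)) = ?k - 1" by (auto simp: SigmaB_def)
    have "dotb one (bvec \<alpha>) = 0"
      using a(2) prod_mod8[OF a(1) finite] bit_cases[of "dotb one (bvec \<alpha>)"]
      by (auto simp: dot_bvec split: if_splits)
    with key a(3) have "bvec \<alpha> \<in> G" by (simp add: G_def)
    moreover have "\<alpha> \<in> Fib (bvec \<alpha>)" using a(1) Fib_mem by blast
    ultimately show "\<alpha> \<in> (\<Union>b\<in>G. Fib b)" by blast
  next
    fix \<alpha> assume "\<alpha> \<in> (\<Union>b\<in>G. Fib b)"
    then obtain b where bG: "b \<in> G" "\<alpha> \<in> Fib b" by blast
    then have a: "\<forall>j. \<alpha> j \<in> {1,5,9,13}" and bb: "bvec \<alpha> = b" using Fib_mem by blast+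
    have d1: "dotb one (bvec \<alpha>) = 0" "dotb u (bvec \<alpha>) = 1" using bG(1) bb by (auto simp: G_def)
    have "(\<Prod>j\<in>UNIV. \<alpha> j) mod 8 = 1" using prod_mod8[OF a finite] d1(1) by (simp add: dot_bvec)
    moreover have "rank (augment B (bvec \<alpha>)) = ?k - 1" using key[OF d1(1)] d1(2) by simp
    ultimately show "\<alpha> \<in> SigmaB B" using a by (simp add: SigmaB_def)
  qed
  have "card (SigmaB B) = (\<Sum>b\<in>G. card (Fib b))"
    unfolding Sig by (rule card_UN_disjoint) (auto simp: finFib Fib_mem)
  also have "\<dots> = card G * 2 ^ ?k" by (simp add: cardFib)
  also have "\<dots> = 2 ^ (?k - 2 + ?k)" by (simp add: cardG power_add)
  also have "?k - 2 + ?k = 2 * ?k - 2" using assms(1) by simp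
  finally show ?thesis .
qed

end
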